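(* In the setting described in the context, let $F$ be strongly convex with respect to $\|\cdot\|_L$ with convexity parameter $\mu>0$. If $x_k$ is the random point generated by UCDC$(x_0)$, then $$\mathbf{E}[F(x_k)-F^*]\leq\left(1-\frac{1-\gamma_\mu}{n}\right)^k(F(x_0)-F^* ),$$ where $\gamma_\mu=1-\frac\mu4$ if $\mu\leq2$ and $\gamma_\mu=\frac1\mu$ otherwise.
   Context: Let $U\in\mathbf{R}^{N\times N}$ be a column permutation of the $N\times N$ identity matrix, partitioned as $U=[U_1,\dots,U_n]$ with $U_i\in\mathbf{R}^{N\times N_i}$, $\sum_iN_i=N$. For $x\in\mathbf{R}^N$ write $x^{(i)}=U_i^Tx$. Each $\mathbf{R}^{N_i}$ carries the norm $\|t\|_{(i)}=\langle B_it,t\rangle^{1/2}$ and dual norm $\|t\|_{(i)}^*=\langle B_i^{-1}t,t\rangle^{1/2}$ with $B_i$ positive definite. Consider minimizing $F(x)=f(x)+\Psi(x)$ over $\mathbf{R}^N$, where $f$ is convex and differentiable with $\|\nabla_if(x+U_it)-\nabla_if(x)\|_{(i)}^*\leq L_i\|t\|_{(i)}$ for all $x,t,i$ (constants $L_i>0$, $\nabla_if(x)=U_i^T\nabla f(x)$), and $\Psi(x)=\sum_i\Psi_i(x^{(i)})$ with each $\Psi_i$ proper closed convex. The problem has a minimizer; $F^*$ is the optimal value. Let $\|x\|_L=(\sum_iL_i\|x^{(i)}\|_{(i)}^2)^{1/2}$. Strong convexity w.r.t. $\|\cdot\|_L$ with parameter $\mu$: $F(x)\geq F(y)+\langle F'(y),x-y\rangle+\frac\mu2\|x-y\|_L^2$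 for all $x,y\in\mathrm{dom}\,F$ and all subgradients $F'(y)$. Algorithm UCDC$(x_0)$: for $k=0,1,2,\dots$, choose $i\in\{1,\dots,n\}$ uniformly at random (independently), compute $T^{(i)}(x_k)=\arg\min_{t\in\mathbf{R}^{N_i}}\{\langle\nabla_if(x_k),t\rangle+\frac{L_i}{2}\|t\|_{(i)}^2+\Psi_i(x_k^{(i)}+t)\}$ and set $x_{k+1}=x_k+U_iT^{(i)}(x_k)$. *)

theory Defs
  imports "HOL-Analysis.Analysis"
begin

text \<open>Coordinates of R^N are the finite type 'a; blocks are the finite type 'b.
  The column permutation U = [U_1,...,U_n] is encoded by the map blk assigning each
  coordinate to its block.  A vector of R^{N_i} is represented by its embedding
  U_i t, i.e. a vector of real^'a supported on block i.\<close>

definition blockset :: "('a \<Rightarrow> 'b) \<Rightarrow> 'b \<Rightarrow> 'a set" where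
  "blockset blk i = {a. blk a = i}"

definition bsub :: "('a::finite \<Rightarrow> 'b) \<Rightarrow> 'b \<Rightarrow> (real^'a) set" where
  "bsub blk i = {t. \<forall>a. blk a \<noteq> i \<longrightarrow> t $ a = 0}"

text \<open>bproj blk i x = U_i U_i^T x, the embedding of x^(i).\<close>
definition bproj :: "('a::finite \<Rightarrow> 'b) \<Rightarrow> 'b \<Rightarrow> real^'a \<Rightarrow> real^'a" where
  "bproj blk i x = (\<chi> a. if blk a = i then x $ a else 0)"

definition bquad :: "('a::finite \<Rightarrow> 'b) \<Rightarrow> ('b \<Rightarrow> 'a \<Rightarrow> 'a \<Rightarrow> real) \<Rightarrow> 'b \<Rightarrow> real^'a \<Rightarrow> real" where
  "bquad blk M i t = (\<Sum>a\<in>blockset blk i. \<Sum>c\<in>blockset blk i. M i a c * t $ a * t $ c)"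

definition bnorm :: "('a::finite \<Rightarrow> 'b) \<Rightarrow> ('b \<Rightarrow> 'a \<Rightarrow> 'a \<Rightarrow> real) \<Rightarrow> 'b \<Rightarrow> real^'a \<Rightarrow> real" where
  "bnorm blk B i t = sqrt (bquad blk B i t)"

definition block_posdef :: "('a::finite \<Rightarrow> 'b) \<Rightarrow> ('b \<Rightarrow> 'a \<Rightarrow> 'a \<Rightarrow> real) \<Rightarrow> 'b \<Rightarrow> bool" where
  "block_posdef blk B i \<longleftrightarrow>
     (\<forall>a\<in>blockset blk i. \<forall>c\<in>blockset blk i. B i a c = B i c a) \<and>
     (\<forall>t\<in>bsub blk i. t \<noteq> 0 \<longrightarrow> bquad blk B i t > 0)"

definition block_inverse :: "('a::finite \<Rightarrow> 'b) \<Rightarrow> ('b \<Rightarrow> 'a \<Rightarrow> 'a \<Rightarrow> real) \<Rightarrow> ('b \<Rightarrow> 'a \<Rightarrow> 'a \<Rightarrow> real) \<Rightarrow> 'b \<Rightarrow> bool" where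
  "block_inverse blk B Binv i \<longleftrightarrow>
     (\<forall>a\<in>blockset blk i. \<forall>d\<in>blockset blk i.
        (\<Sum>c\<in>blockset blk i. B i a c * Binv i c d) = (if a = d then 1 else 0))"

definition bdual :: "('a::finite \<Rightarrow> 'b) \<Rightarrow> ('b \<Rightarrow> 'a \<Rightarrow> 'a \<Rightarrow> real) \<Rightarrow> 'b \<Rightarrow> real^'a \<Rightarrow> real" where
  "bdual blk Binv i t = sqrt (bquad blk Binv i t)"

definition Lnorm :: "('a::finite \<Rightarrow> 'b::finite) \<Rightarrow> ('b \<Rightarrow> 'a \<Rightarrow> 'a \<Rightarrow> real) \<Rightarrow> ('b \<Rightarrow> real) \<Rightarrow> real^'a \<Rightarrow> real" where
  "Lnorm blk B L x = sqrt (\<Sum>i\<in>UNIV. L i * (bnorm blk B i (bproj blk i x))\<^sup>2)"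

definition proper_closed_convex_on :: "(real^'a) set \<Rightarrow> (real^'a::finite \<Rightarrow> ereal) \<Rightarrow> bool" where
  "proper_closed_convex_on S g \<longleftrightarrow>
     (\<forall>t\<in>S. g t \<noteq> -\<infinity>) \<and> (\<exists>t\<in>S. g t \<noteq> \<infinity>) \<and>
     (\<forall>t\<in>S. \<forall>s\<in>S. \<forall>\<theta>::real. 0 \<le> \<theta> \<and> \<theta> \<le> 1 \<longrightarrow>
        g (\<theta> *\<^sub>R t + (1 - \<theta>) *\<^sub>R s) \<le> ereal \<theta> * g t + ereal (1 - \<theta>) * g s) \<and>
     closed {(t, r::real). t \<in> S \<and> g t \<le> ereal r}"

definition Fobj :: "('a::finite \<Rightarrow> 'b::finite) \<Rightarrow> (real^'a \<Rightarrow> real) \<Rightarrow> ('b \<Rightarrow> real^'a \<Rightarrow> ereal) \<Rightarrow> real^'a \<Rightarrow> ereal" where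
  "Fobj blk f Psi x = ereal (f x) + (\<Sum>i\<in>UNIV. Psi i (bproj blk i x))"

definition subgradients :: "(real^'a::finite \<Rightarrow> ereal) \<Rightarrow> real^'a \<Rightarrow> (real^'a) set" where
  "subgradients F y = {g. \<forall>z. F z \<ge> F y + ereal (g \<bullet> (z - y))}"

definition strongly_convex_L :: "(real^'a::finite \<Rightarrow> ereal) \<Rightarrow> (real^'a \<Rightarrow> real) \<Rightarrow> real \<Rightarrow> bool" where
  "strongly_convex_L F nrm \<mu> \<longleftrightarrow>
     (\<forall>x y g. F x < \<infinity> \<and> F y < \<infinity> \<and> g \<in> subgradients F y \<longrightarrow>
        F x \<ge> F y + ereal (g \<bullet> (x - y)) + ereal (\<mu> / 2 * (nrm (x - y))\<^sup>2))"

text \<open>T^(i)(x), embedded as U_i T^(i)(x) (note <grad_i f(x), t> = <grad f(x), U_i t>).\<close>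
definition Tblock :: "('a::finite \<Rightarrow> 'b) \<Rightarrow> ('b \<Rightarrow> 'a \<Rightarrow> 'a \<Rightarrow> real) \<Rightarrow> ('b \<Rightarrow> real)
    \<Rightarrow> (real^'a \<Rightarrow> real^'a) \<Rightarrow> ('b \<Rightarrow> real^'a \<Rightarrow> ereal) \<Rightarrow> 'b \<Rightarrow> real^'a \<Rightarrow> real^'a" where
  "Tblock blk B L grad Psi i x =
     (SOME t. t \<in> bsub blk i \<and>
        (\<forall>s\<in>bsub blk i.
           ereal (grad x \<bullet> t + L i / 2 * (bnorm blk B i t)\<^sup>2) + Psi i (bproj blk i x + t)
         \<le> ereal (grad x \<bullet> s + L i / 2 * (bnorm blk B i s)\<^sup>2) + Psi i (bproj blk i x + s)))"

text \<open>Iterates of UCDC(x0) along the index sequence is (is k = block chosen at step k).\<close>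
fun ucdc :: "('a::finite \<Rightarrow> 'b) \<Rightarrow> ('b \<Rightarrow> 'a \<Rightarrow> 'a \<Rightarrow> real) \<Rightarrow> ('b \<Rightarrow> real)
    \<Rightarrow> (real^'a \<Rightarrow> real^'a) \<Rightarrow> ('b \<Rightarrow> real^'a \<Rightarrow> ereal) \<Rightarrow> real^'a \<Rightarrow> (nat \<Rightarrow> 'b) \<Rightarrow> nat \<Rightarrow> real^'a" where
  "ucdc blk B L grad Psi x0 is 0 = x0"
| "ucdc blk B L grad Psi x0 is (Suc k) =
     (let x = ucdc blk B L grad Psi x0 is k in x + Tblock blk B L grad Psi (is k) x)"

text \<open>Expectation over i_0,...,i_{k-1} i.i.d. uniform on the n blocks.\<close>
definition expect_ucdc :: "nat \<Rightarrow> ((nat \<Rightarrow> 'b::finite) \<Rightarrow> ereal) \<Rightarrow> ereal" where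
  "expect_ucdc k X = ereal (1 / real CARD('b) ^ k) * (\<Sum>is\<in>PiE {..<k} (\<lambda>_. UNIV). X is)"

definition gamma_mu :: "real \<Rightarrow> real" where
  "gamma_mu \<mu> = (if \<mu> \<le> 2 then 1 - \<mu> / 4 else 1 / \<mu>)"

end

theory Submission
  imports Defs
begin


definition bil :: "('a::finite \<Rightarrow> 'b) \<Rightarrow> ('b \<Rightarrow> 'a \<Rightarrow> 'a \<Rightarrow> real) \<Rightarrow> 'b \<Rightarrow> real^'a \<Rightarrow> real^'a \<Rightarrow> real" where
  "bil blk M i u v = (\<Sum>a\<in>blockset blk i. \<Sum>c\<in>blockset blk i. M i a c * u $ a * v $ c)"

lemma bquad_bil: "bquad blk M i t = bil blk M i t t"
  by (simp add: bquad_def bil_def)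

lemma bil_diff_left: "bil blk M i (u - w) v = bil blk M i u v - bil blk M i w v"
  by (simp add: bil_def algebra_simps sum_subtractf)
lemma bil_diff_right: "bil blk M i u (v - w) = bil blk M i u v - bil blk M i u w"
  by (simp add: bil_def algebra_simps sum_subtractf)
lemma bil_scale_left: "bil blk M i (c *\<^sub>R u) v = c * bil blk M i u v"
  by (simp add: bil_def algebra_simps sum_distrib_left)
lemma bil_scale_right: "bil blk M i u (c *\<^sub>R v) = c * bil blk M i u v"
  by (simp add: bil_def algebra_simps sum_distrib_left)
lemma bil_sym:
  assumes "block_posdef blk B i"
  shows "bil blk B i u v = bil blk B i v u"
proof -
  have s: "\<And>a c. a \<in> blockset blk i \<Longrightarrow> c \<in> blockset blk i \<Longrightarrow> B i a c = B i c a"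
    using assms by (auto simp: block_posdef_def)
  have "bil blk B i u v = (\<Sum>a\<in>blockset blk i. \<Sum>c\<in>blockset blk i. B i c a * v $ c * u $ a)"
    unfolding bil_def by (intro sum.cong refl) (auto simp: s)
  also have "\<dots> = bil blk B i v u"
    unfolding bil_def by (rule sum.swap)
  finally show ?thesis .
qed

lemma bsub_diff: "u \<in> bsub blk i \<Longrightarrow> v \<in> bsub blk i \<Longrightarrow> u - v \<in> bsub blk i"
  by (simp add: bsub_def)
lemma bsub_add: "u \<in> bsub blk i \<Longrightarrow> v \<in> bsub blk i \<Longrightarrow> u + v \<in> bsub blk i"
  by (simp add: bsub_def)
lemma bsub_scale: "u \<in> bsub blk i \<Longrightarrow> c *\<^sub>R u \<in> bsub blk i"
  by (simp add: bsub_def)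
lemma bproj_bsub: "bproj blk i x \<in> bsub blk i"
  by (simp add: bsub_def bproj_def)
lemma bproj_id: "t \<in> bsub blk i \<Longrightarrow> bproj blk i t = t"
  by (auto simp: bsub_def bproj_def vec_eq_iff)
lemma bproj_other: "t \<in> bsub blk i \<Longrightarrow> j \<noteq> i \<Longrightarrow> bproj blk j t = 0"
  by (auto simp: bsub_def bproj_def vec_eq_iff)
lemma bproj_add: "bproj blk i (x + y) = bproj blk i x + bproj blk i y"
  by (auto simp: bproj_def vec_eq_iff)
lemma bproj_diff: "bproj blk i (x - y) = bproj blk i x - bproj blk i y"
  by (auto simp: bproj_def vec_eq_iff)
lemma bproj_scale: "bproj blk i (c *\<^sub>R x) = c *\<^sub>R bproj blk i x"
  by (auto simp: bproj_def vec_eq_iff)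
lemma inner_bsub: "t \<in> bsub blk i \<Longrightarrow> g \<bullet> t = bproj blk i g \<bullet> t"
  by (auto simp: bsub_def bproj_def inner_vec_def intro!: sum.cong)
lemma sum_bproj: "(\<Sum>i\<in>UNIV. bproj (blk::'a::finite \<Rightarrow> 'b::finite) i x) = x"
  by (auto simp: bproj_def vec_eq_iff sum.delta')

lemma bquad_nonneg:
  assumes "block_posdef blk B i" "t \<in> bsub blk i"
  shows "bquad blk B i t \<ge> 0"
proof (cases "t = 0")
  case True then show ?thesis by (simp add: bquad_def)
next
  case False then show ?thesis using assms by (auto simp: block_posdef_def intro: less_imp_le)
qed

lemma bil_CS:
  assumes P: "block_posdef blk B i" and u: "u \<in> bsub blk i" and t: "t \<in> bsub blk i"
  shows "(bil blk B i u t)\<^sup>2 \<le> bil blk B i u u * bil blk B i t t"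
proof (cases "bil blk B i t t = 0")
  case True
  then have "t = 0" using P t by (auto simp: block_posdef_def bquad_bil)
  then show ?thesis using bquad_nonneg[OF P u] by (simp add: bil_def bquad_bil)
next
  case False
  let ?q = "bil blk B i t t" and ?p = "bil blk B i u t" and ?r = "bil blk B i u u"
  have qpos: "?q > 0" using False bquad_nonneg[OF P t] by (simp add: bquad_bil)
  define l where "l = ?p / ?q"
  have "0 \<le> bquad blk B i (u - l *\<^sub>R t)"
    by (rule bquad_nonneg[OF P]) (intro bsub_diff bsub_scale u t)
  also have "\<dots> = ?r - 2 * l * ?p + l * l * ?q"
    unfolding bquad_bil bil_diff_left bil_diff_right bil_scale_left bil_scale_right
    using bil_sym[OF P, of t u] by (simp add: algebra_simps)
  also have "\<dots> = ?r - ?p\<^sup>2 / ?q"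
    using qpos by (simp add: l_def field_simps power2_eq_square)
  finally show ?thesis using qpos by (simp add: field_simps)
qed

lemma blockset_finite[simp]: "finite (blockset (blk::'a::finite\<Rightarrow>'b) i)"
  by simp

lemma inner_block_sum:
  assumes "t \<in> bsub blk i"
  shows "g \<bullet> t = (\<Sum>a\<in>blockset blk i. g $ a * t $ a)"
proof -
  have "g \<bullet> t = (\<Sum>a\<in>UNIV. g $ a * t $ a)" by (simp add: inner_vec_def)
  also have "\<dots> = (\<Sum>a\<in>blockset blk i. g $ a * t $ a)"
    using assms by (intro sum.mono_neutral_right) (auto simp: bsub_def blockset_def)
  finally show ?thesis .
qed

lemma dual_CS:
  assumes P: "block_posdef blk B i" and I: "block_inverse blk B Binv i"
    and g: "g \<in> bsub blk i" and t: "t \<in> bsub blk i"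
  shows "bquad blk Binv i g \<ge> 0 \<and> (g \<bullet> t)\<^sup>2 \<le> bquad blk Binv i g * bquad blk B i t"
proof -
  let ?S = "blockset blk i"
  define u where "u = (\<chi> a. if blk a = i then (\<Sum>d\<in>?S. Binv i a d * g $ d) else 0)"
  have u: "u \<in> bsub blk i" by (simp add: u_def bsub_def)
  have uS: "a \<in> ?S \<Longrightarrow> u $ a = (\<Sum>d\<in>?S. Binv i a d * g $ d)" for a
    by (simp add: u_def blockset_def)
  have Bu: "(\<Sum>c\<in>?S. B i a c * u $ c) = g $ a" if a: "a \<in> ?S" for a
  proof -
    have "(\<Sum>c\<in>?S. B i a c * u $ c) = (\<Sum>c\<in>?S. \<Sum>d\<in>?S. B i a c * Binv i c d * g $ d)"
      by (intro sum.cong refl) (simp add: uS sum_distrib_left mult.assoc)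
    also have "\<dots> = (\<Sum>d\<in>?S. (\<Sum>c\<in>?S. B i a c * Binv i c d) * g $ d)"
      by (subst sum.swap) (simp add: sum_distrib_right)
    also have "\<dots> = (\<Sum>d\<in>?S. if a = d then g $ d else 0)"
      using I a by (intro sum.cong refl) (auto simp: block_inverse_def)
    also have "\<dots> = g $ a" using a by (simp add: sum.delta)
    finally show ?thesis .
  qed
  have gt: "g \<bullet> t = bil blk B i t u"
  proof -
    have "g \<bullet> t = (\<Sum>a\<in>?S. g $ a * t $ a)" by (rule inner_block_sum[OF t])
    also have "\<dots> = (\<Sum>a\<in>?S. (\<Sum>c\<in>?S. B i a c * u $ c) * t $ a)"
      by (intro sum.cong refl) (simp add: Bu)
    also have "\<dots> = bil blk B i t u"
      by (simp add: bil_def sum_distrib_right sum_distrib_left mult_ac)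
    finally show ?thesis .
  qed
  have gg: "bquad blk Binv i g = bil blk B i u u"
  proof -
    have "bquad blk Binv i g = (\<Sum>a\<in>?S. g $ a * u $ a)"
      unfolding bquad_def by (intro sum.cong refl) (simp add: uS sum_distrib_left mult_ac)
    also have "\<dots> = (\<Sum>a\<in>?S. (\<Sum>c\<in>?S. B i a c * u $ c) * u $ a)"
      by (intro sum.cong refl) (simp add: Bu)
    also have "\<dots> = bil blk B i u u"
      by (simp add: bil_def sum_distrib_right sum_distrib_left mult_ac)
    finally show ?thesis .
  qed
  have "bquad blk Binv i g \<ge> 0" using bquad_nonneg[OF P u] gg by (simp add: bquad_bil)
  moreover have "(g \<bullet> t)\<^sup>2 \<le> bquad blk Binv i g * bquad blk B i t"
    using bil_CS[OF P t u] gt gg by (simp add: bquad_bil mult.commute)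
  ultimately show ?thesis by blast
qed

lemma dual_CS_abs:
  assumes P: "block_posdef blk B i" and I: "block_inverse blk B Binv i"
    and t: "t \<in> bsub blk i"
  shows "\<bar>g \<bullet> t\<bar> \<le> bdual blk Binv i (bproj blk i g) * bnorm blk B i t"
proof -
  have g: "bproj blk i g \<in> bsub blk i" by (rule bproj_bsub)
  from dual_CS[OF P I g t] have h: "bquad blk Binv i (bproj blk i g) \<ge> 0"
    "(bproj blk i g \<bullet> t)\<^sup>2 \<le> bquad blk Binv i (bproj blk i g) * bquad blk B i t" by auto
  have "\<bar>g \<bullet> t\<bar> = sqrt ((bproj blk i g \<bullet> t)\<^sup>2)" using inner_bsub[OF t, of g] by simp
  also have "\<dots> \<le> sqrt (bquad blk Binv i (bproj blk i g) * bquad blk B i t)"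
    using h(2) by (rule real_sqrt_le_mono)
  also have "\<dots> = bdual blk Binv i (bproj blk i g) * bnorm blk B i t"
    by (simp add: bdual_def bnorm_def real_sqrt_mult)
  finally show ?thesis .
qed

lemma bquad_scale: "bquad blk B i (c *\<^sub>R t) = c\<^sup>2 * bquad blk B i t"
  by (simp add: bquad_bil bil_scale_left bil_scale_right power2_eq_square)

lemma bnorm_scale: "bnorm blk B i (c *\<^sub>R t) = \<bar>c\<bar> * bnorm blk B i t"
  by (simp add: bnorm_def bquad_scale real_sqrt_mult)

lemma bnorm_sq: "block_posdef blk B i \<Longrightarrow> t \<in> bsub blk i \<Longrightarrow> (bnorm blk B i t)\<^sup>2 = bquad blk B i t"
  by (simp add: bnorm_def bquad_nonneg)

lemma descent:
  assumes P: "block_posdef blk B i" and I: "block_inverse blk B Binv i"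
    and fg: "\<And>x. (f has_derivative (\<lambda>h. grad x \<bullet> h)) (at x)"
    and lip: "\<And>x t. t \<in> bsub blk i \<Longrightarrow>
        bdual blk Binv i (bproj blk i (grad (x + t)) - bproj blk i (grad x)) \<le> L i * bnorm blk B i t"
    and Lp: "L i > 0"
    and t: "t \<in> bsub blk i"
  shows "f (x + t) \<le> f x + grad x \<bullet> t + L i / 2 * (bnorm blk B i t)\<^sup>2"
proof -
  define Q where "Q = (bnorm blk B i t)\<^sup>2"
  define \<psi> where "\<psi> = (\<lambda>s::real. f (x + s *\<^sub>R t) - s * (grad x \<bullet> t) - L i / 2 * s\<^sup>2 * Q)"
  have fd: "((\<lambda>s. f (x + s *\<^sub>R t)) has_real_derivative (grad (x + s *\<^sub>R t) \<bullet> t)) (at s)" for s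
  proof -
    have d1: "((\<lambda>s. x + s *\<^sub>R t) has_derivative (\<lambda>h. h *\<^sub>R t)) (at s)"
      by (auto intro!: derivative_eq_intros)
    have h: "((\<lambda>s. f (x + s *\<^sub>R t)) has_derivative (\<lambda>h. grad (x + s *\<^sub>R t) \<bullet> (h *\<^sub>R t))) (at s)"
      using has_derivative_compose[OF d1 fg] by simp
    have e: "(\<lambda>h. grad (x + s *\<^sub>R t) \<bullet> (h *\<^sub>R t)) = (*) (grad (x + s *\<^sub>R t) \<bullet> t)"
      by (auto simp: fun_eq_iff)
    show ?thesis using h unfolding has_field_derivative_def e .
  qed
  have bt: "bnorm blk B i t \<ge> 0" by (simp add: bnorm_def bquad_nonneg[OF P t])
  have D: "\<exists>y. DERIV \<psi> s :> y \<and> y \<le> 0" if s: "0 \<le> s" "s \<le> 1" for s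
  proof -
    have "DERIV \<psi> s :> (grad (x + s *\<^sub>R t) \<bullet> t - 1 * (grad x \<bullet> t) - L i / 2 * (2 * s) * Q)"
      unfolding \<psi>_def by (intro derivative_eq_intros) (auto intro: fd)
    moreover have "grad (x + s *\<^sub>R t) \<bullet> t - 1 * (grad x \<bullet> t) - L i / 2 * (2 * s) * Q \<le> 0"
    proof -
      have "grad (x + s *\<^sub>R t) \<bullet> t - grad x \<bullet> t = (grad (x + s *\<^sub>R t) - grad x) \<bullet> t"
        by (simp add: inner_diff_left)
      also have "\<dots> \<le> bdual blk Binv i (bproj blk i (grad (x + s *\<^sub>R t) - grad x)) * bnorm blk B i t"
        using dual_CS_abs[OF P I t] by (meson abs_le_D1)
      also have "\<dots> \<le> (L i * bnorm blk B i (s *\<^sub>R t)) * bnorm blk B i t"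
        using lip[of "s *\<^sub>R t" x] bsub_scale[OF t] bt
        by (intro mult_right_mono) (auto simp: bproj_diff)
      also have "\<dots> = L i * s * Q" using s by (simp add: bnorm_scale Q_def power2_eq_square)
      finally show ?thesis by simp
    qed
    ultimately show ?thesis by blast
  qed
  have "\<psi> 1 \<le> \<psi> 0" by (rule DERIV_nonpos_imp_nonincreasing[of 0 1 \<psi>]) (use D in auto)
  then show ?thesis by (simp add: \<psi>_def Q_def)
qed

lemma grad_ineq:
  fixes f :: "real^'a::finite \<Rightarrow> real"
  assumes cv: "convex_on UNIV f"
    and fg: "\<And>x. (f has_derivative (\<lambda>h. grad x \<bullet> h)) (at x)"
  shows "f y \<ge> f x + grad x \<bullet> (y - x)"
proof -
  define g where "g = (\<lambda>s::real. f (x + s *\<^sub>R (y - x)))"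
  have gc: "convex_on UNIV g"
  proof (rule convex_onI)
    fix t a b :: real assume "t > 0" "t < 1"
    have "x + ((1 - t) *\<^sub>R a + t *\<^sub>R b) *\<^sub>R (y - x) = (1 - t) *\<^sub>R (x + a *\<^sub>R (y - x)) + t *\<^sub>R (x + b *\<^sub>R (y - x))"
      by (simp add: algebra_simps)
    then show "g ((1 - t) *\<^sub>R a + t *\<^sub>R b) \<le> (1 - t) * g a + t * g b"
      unfolding g_def using convex_onD[OF cv, of t] \<open>t > 0\<close> \<open>t < 1\<close> by simp
  qed simp
  have d1: "((\<lambda>s. x + s *\<^sub>R (y - x)) has_derivative (\<lambda>h. h *\<^sub>R (y - x))) (at 0)"
    by (auto intro!: derivative_eq_intros)
  have h: "(g has_derivative (\<lambda>h. grad (x + 0 *\<^sub>R (y - x)) \<bullet> (h *\<^sub>R (y - x)))) (at 0)"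
    unfolding g_def using has_derivative_compose[OF d1 fg] by simp
  have e: "(\<lambda>h. grad (x + 0 *\<^sub>R (y - x)) \<bullet> (h *\<^sub>R (y - x))) = (*) (grad x \<bullet> (y - x))"
    by (auto simp: fun_eq_iff)
  have "(g has_real_derivative (grad x \<bullet> (y - x))) (at 0 within UNIV)"
    using h unfolding has_field_derivative_def e .
  from convex_on_imp_above_tangent[OF gc _ _ _ this, of 1] have "g 1 - g 0 \<ge> grad x \<bullet> (y - x)"
    by simp
  then show ?thesis by (simp add: g_def)
qed

lemma pcc_affine_lb:
  fixes G :: "real^'a::finite \<Rightarrow> ereal"
  assumes pcc: "proper_closed_convex_on (bsub blk i) G"
  shows "\<exists>a1 a2 b. a2 > 0 \<and> (\<forall>t r. t \<in> bsub blk i \<and> G t \<le> ereal r \<longrightarrow> b < a1 \<bullet> t + a2 * r)"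
proof -
  let ?S = "bsub blk i"
  define C where "C = {(t, r::real). t \<in> ?S \<and> G t \<le> ereal r}"
  have ninf: "\<And>t. t \<in> ?S \<Longrightarrow> G t \<noteq> -\<infinity>" and
    ex: "\<exists>t\<in>?S. G t \<noteq> \<infinity>" and
    cvx: "\<And>t s \<theta>. t \<in> ?S \<Longrightarrow> s \<in> ?S \<Longrightarrow> 0 \<le> \<theta> \<Longrightarrow> \<theta> \<le> 1 \<Longrightarrow>
        G (\<theta> *\<^sub>R t + (1 - \<theta>) *\<^sub>R s) \<le> ereal \<theta> * G t + ereal (1 - \<theta>) * G s" and
    cl: "closed C"
    using pcc unfolding proper_closed_convex_on_def C_def by blast+
  have convC: "convex C"
  proof (rule convexI)
    fix p q :: "(real^'a) \<times> real" and u v :: real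
    assume p: "p \<in> C" and q: "q \<in> C" and u: "0 \<le> u" and v: "0 \<le> v" and uv: "u + v = 1"
    obtain t r where pt: "p = (t, r)" by (cases p)
    obtain s r' where qt: "q = (s, r')" by (cases q)
    have t: "t \<in> ?S" "G t \<le> ereal r" using p pt C_def by auto
    have s: "s \<in> ?S" "G s \<le> ereal r'" using q qt C_def by auto
    have v1: "v = 1 - u" using uv by simp
    have "G (u *\<^sub>R t + (1 - u) *\<^sub>R s) \<le> ereal u * G t + ereal (1 - u) * G s"
      using cvx[OF t(1) s(1) u] uv v by simp
    also have "\<dots> \<le> ereal u * ereal r + ereal (1 - u) * ereal r'"
      using t s u v v1 by (intro add_mono ereal_mult_left_mono) auto
    finally have "G (u *\<^sub>R t + (1 - u) *\<^sub>R s) \<le> ereal (u * r + (1 - u) * r')" by simp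
    moreover have "u *\<^sub>R t + (1 - u) *\<^sub>R s \<in> ?S" using t s by (intro bsub_add bsub_scale)
    ultimately show "u *\<^sub>R p + v *\<^sub>R q \<in> C" using pt qt v1 by (simp add: C_def)
  qed
  obtain t0 where t0: "t0 \<in> ?S" "G t0 \<noteq> \<infinity>" using ex by blast
  then obtain r0 where r0: "G t0 = ereal r0" using ninf[OF t0(1)] by (cases "G t0") auto
  have notin: "(t0, r0 - 1) \<notin> C" using r0 by (simp add: C_def)
  obtain a b where ab: "inner a (t0, r0 - 1) < b" "\<forall>x\<in>C. inner a x > b"
    using separating_hyperplane_closed_point[OF convC cl notin] by blast
  obtain a1 a2 where a: "a = (a1, a2)" by (cases a)
  have in0: "(t0, r0) \<in> C" using t0 r0 by (simp add: C_def)
  have h1: "a1 \<bullet> t0 + a2 * (r0 - 1) < b" using ab(1) a by simp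
  have h2: "b < a1 \<bullet> t0 + a2 * r0" using ab(2) in0 a by auto
  have "a2 > 0" using h1 h2 by (simp add: algebra_simps)
  moreover have "\<forall>t r. t \<in> ?S \<and> G t \<le> ereal r \<longrightarrow> b < a1 \<bullet> t + a2 * r"
    using ab(2) a by (auto simp: C_def)
  ultimately show ?thesis by blast
qed

lemma continuous_on_bquad:
  assumes "continuous_on S g"
  shows "continuous_on S (\<lambda>q. bquad blk B i (g q :: real^'a::finite))"
proof -
  have c: "continuous_on S (\<lambda>q. g q $ a)" for a
    using continuous_on_compose2[OF linear_continuous_on[OF bounded_linear_vec_nth[of a]] assms] by (metis subset_UNIV)
  show ?thesis unfolding bquad_def by (intro continuous_intros c)
qed

lemma coord_bound:
  assumes P: "block_posdef blk B i" and I: "block_inverse blk B Binv i" and t: "t \<in> bsub blk i"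
  shows "\<bar>t $ a\<bar> \<le> bdual blk Binv i (bproj blk i (axis a 1)) * bnorm blk B i t"
proof -
  have "t $ a = axis a 1 \<bullet> t" by (subst inner_commute) (simp add: inner_axis)
  then show ?thesis using dual_CS_abs[OF P I t, of "axis a 1"] by simp
qed

lemma bdual_nonneg:
  assumes P: "block_posdef blk B i" and I: "block_inverse blk B Binv i"
  shows "bdual blk Binv i (bproj blk i g) \<ge> 0"
  using dual_CS[OF P I bproj_bsub bproj_bsub] by (simp add: bdual_def)

lemma bnorm_nonneg:
  assumes P: "block_posdef blk B i" and t: "t \<in> bsub blk i"
  shows "bnorm blk B i t \<ge> 0"
  using bquad_nonneg[OF P t] by (simp add: bnorm_def)

lemma Tblock_exists:
  fixes G :: "real^'a::finite \<Rightarrow> ereal" and w p :: "real^'a" and l :: real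
  assumes P: "block_posdef blk B i" and I: "block_inverse blk B Binv i"
    and lp: "l > 0" and pcc: "proper_closed_convex_on (bsub blk i) G"
    and p: "p \<in> bsub blk i"
  shows "\<exists>t. t \<in> bsub blk i \<and>
        (\<forall>s\<in>bsub blk i.
           ereal (w \<bullet> t + l / 2 * (bnorm blk B i t)\<^sup>2) + G (p + t)
         \<le> ereal (w \<bullet> s + l / 2 * (bnorm blk B i s)\<^sup>2) + G (p + s))"
proof -
  let ?S = "bsub blk i"
  let ?Q = "bquad blk B i"
  let ?bn = "bnorm blk B i"
  have ninf: "\<And>t. t \<in> ?S \<Longrightarrow> G t \<noteq> -\<infinity>" and
    ex: "\<exists>t\<in>?S. G t \<noteq> \<infinity>" and
    cl: "closed {(t, r::real). t \<in> ?S \<and> G t \<le> ereal r}"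
    using pcc unfolding proper_closed_convex_on_def by blast+
  obtain a1 a2 b where a2: "a2 > 0" and lb: "\<And>t r. t \<in> ?S \<Longrightarrow> G t \<le> ereal r \<Longrightarrow> b < a1 \<bullet> t + a2 * r"
    using pcc_affine_lb[OF pcc] by blast
  obtain t1 where t1: "t1 \<in> ?S" "G t1 \<noteq> \<infinity>" using ex by blast
  then obtain r0 where r0: "G t1 = ereal r0" using ninf[OF t1(1)] by (cases "G t1") auto
  define t0 where "t0 = t1 - p"
  have t0: "t0 \<in> ?S" "p + t0 = t1" using t1 p by (auto simp: t0_def intro: bsub_diff)
  define E where "E = {(t, r::real). t \<in> ?S \<and> G (p + t) \<le> ereal r}"
  define h where "h = (\<lambda>q::(real^'a) \<times> real. w \<bullet> fst q + l / 2 * ?Q (fst q) + snd q)"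
  define c0 where "c0 = h (t0, r0)"
  define K where "K = E \<inter> {q. h q \<le> c0}"
  have memS: "t \<in> ?S \<longleftrightarrow> p + t \<in> ?S" for t
    using bsub_add[OF p, of t] bsub_diff[of "p + t" blk i p] p by auto
  have hc: "continuous_on UNIV h"
    unfolding h_def by (intro continuous_intros continuous_on_bquad)
  have closedE: "closed E"
  proof -
    have eq: "E = (\<lambda>q. (p + fst q, snd q)) -` {(t, r::real). t \<in> ?S \<and> G t \<le> ereal r}"
      by (auto simp: E_def memS[symmetric])
    have "closed ((\<lambda>q::(real^'a)\<times>real. (p + fst q, snd q)) -` {(t, r::real). t \<in> ?S \<and> G t \<le> ereal r})"
      by (rule continuous_closed_vimage[OF cl]) (intro continuous_intros)
    then show ?thesis using eq by simp
  qed
  have closedK: "closed K"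
    unfolding K_def by (intro closed_Int closedE closed_Collect_le hc continuous_on_const)
  define Dw where "Dw = bdual blk Binv i (bproj blk i w)"
  define Da where "Da = bdual blk Binv i (bproj blk i a1)"
  have Dw: "Dw \<ge> 0" and Da: "Da \<ge> 0" using bdual_nonneg[OF P I] by (auto simp: Dw_def Da_def)
  define M1 where "M1 = \<bar>a2 * c0 - b + a1 \<bullet> p\<bar>"
  define M2 where "M2 = a2 * Dw + Da"
  define R where "R = max 1 ((M1 + M2) * 2 / (a2 * l))"
  have bnd: "?bn t \<le> R \<and> r \<le> c0 + Dw * R \<and> (b - a1 \<bullet> p - Da * R) / a2 < r"
    if q: "(t, r) \<in> K" for t r
  proof -
    have tS: "t \<in> ?S" and Gr: "G (p + t) \<le> ereal r" and hq: "w \<bullet> t + l / 2 * ?Q t + r \<le> c0"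
      using q by (auto simp: K_def E_def h_def)
    have low: "b < a1 \<bullet> (p + t) + a2 * r" using lb[OF _ Gr] tS memS by blast
    define s where "s = ?bn t"
    have s0: "s \<ge> 0" using bnorm_nonneg[OF P tS] by (simp add: s_def)
    have Qs: "?Q t = s\<^sup>2" using bnorm_sq[OF P tS] by (simp add: s_def)
    have wt: "\<bar>w \<bullet> t\<bar> \<le> Dw * s" using dual_CS_abs[OF P I tS] by (simp add: Dw_def s_def)
    have at: "\<bar>a1 \<bullet> t\<bar> \<le> Da * s" using dual_CS_abs[OF P I tS] by (simp add: Da_def s_def)
    have rup: "r \<le> c0 - w \<bullet> t - l / 2 * s\<^sup>2" using hq Qs by simp
    have key: "a2 * l / 2 * s\<^sup>2 < M1 + M2 * s"
    proof -
      have "a2 * r \<le> a2 * (c0 - w \<bullet> t - l / 2 * s\<^sup>2)" using rup a2 by simp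
      then have "b - a1 \<bullet> p - a1 \<bullet> t < a2 * c0 - a2 * (w \<bullet> t) - a2 * l / 2 * s\<^sup>2"
        using low by (simp add: inner_add_right algebra_simps)
      then have "a2 * l / 2 * s\<^sup>2 < (a2 * c0 - b + a1 \<bullet> p) - a2 * (w \<bullet> t) + a1 \<bullet> t" by simp
      also have "\<dots> \<le> M1 + a2 * (Dw * s) + Da * s"
      proof -
        have e1: "a2 * c0 - b + a1 \<bullet> p \<le> M1" unfolding M1_def by (rule abs_ge_self)
        have "- (w \<bullet> t) \<le> Dw * s" using wt by linarith
        then have e2: "a2 * (- (w \<bullet> t)) \<le> a2 * (Dw * s)" using a2 by (intro mult_left_mono) auto
        have e3: "a1 \<bullet> t \<le> Da * s" using at by linarith
        show ?thesis using e1 e2 e3 by simp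
      qed
      finally show ?thesis by (simp add: M2_def algebra_simps)
    qed
    have sR: "s \<le> R"
    proof (cases "s \<le> 1")
      case True then show ?thesis by (simp add: R_def)
    next
      case False
      have M: "M1 \<ge> 0" "M2 \<ge> 0" using Dw Da a2 by (auto simp: M1_def M2_def)
      have "a2 * l / 2 * s * s < (M1 + M2) * s"
      proof -
        have "M1 \<le> M1 * s" using M False by (simp add: mult_le_cancel_left1)
        then show ?thesis using key by (simp add: power2_eq_square algebra_simps)
      qed
      then have "a2 * l / 2 * s < M1 + M2" using False by simp
      then have "s < (M1 + M2) * 2 / (a2 * l)" using a2 lp by (simp add: field_simps)
      then show ?thesis by (simp add: R_def)
    qed
    have "r \<le> c0 + Dw * s"
    proof -
      have "0 \<le> l / 2 * s\<^sup>2" using lp by simp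
      moreover have "- (w \<bullet> t) \<le> Dw * s" using wt by linarith
      ultimately show ?thesis using rup by linarith
    qed
    also have "\<dots> \<le> c0 + Dw * R" using sR Dw by (simp add: mult_left_mono)
    finally have r1: "r \<le> c0 + Dw * R" .
    have "b - a1 \<bullet> p - Da * R \<le> b - a1 \<bullet> p - Da * s" using sR Da by (simp add: mult_left_mono)
    also have "\<dots> \<le> b - a1 \<bullet> p - a1 \<bullet> t" using at by simp
    also have "\<dots> < a2 * r" using low by (simp add: inner_add_right)
    finally have "(b - a1 \<bullet> p - Da * R) / a2 < r" using a2 by (simp add: field_simps)
    then show ?thesis using r1 sR by (simp add: s_def)
  qed
  define Ea where "Ea = (\<lambda>a. bdual blk Binv i (bproj blk i (axis a (1::real))))"
  have boundedK: "bounded K"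
  proof -
    define Rt where "Rt = (\<Sum>a\<in>UNIV. Ea a * R)"
    define Rr where "Rr = \<bar>c0 + Dw * R\<bar> + \<bar>(b - a1 \<bullet> p - Da * R) / a2\<bar>"
    have "norm q \<le> Rt + Rr" if q: "q \<in> K" for q
    proof -
      obtain t r where qt: "q = (t, r)" by (cases q)
      have tS: "t \<in> ?S" using q qt by (auto simp: K_def E_def)
      have b3: "?bn t \<le> R" "r \<le> c0 + Dw * R" "(b - a1 \<bullet> p - Da * R) / a2 < r"
        using bnd q qt by auto
      have "norm t \<le> (\<Sum>a\<in>UNIV. \<bar>t $ a\<bar>)" by (rule norm_le_l1_cart)
      also have "\<dots> \<le> Rt" unfolding Rt_def
      proof (rule sum_mono)
        fix a
        have "\<bar>t $ a\<bar> \<le> Ea a * ?bn t" using coord_bound[OF P I tS] by (simp add: Ea_def)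
        also have "\<dots> \<le> Ea a * R" using b3(1) bdual_nonneg[OF P I] by (simp add: Ea_def mult_left_mono)
        finally show "\<bar>t $ a\<bar> \<le> Ea a * R" .
      qed
      finally have nt: "norm t \<le> Rt" .
      have "\<bar>r\<bar> \<le> \<bar>c0 + Dw * R\<bar> + \<bar>(b - a1 \<bullet> p - Da * R) / a2\<bar>"
        using b3(2,3) by arith
      then have nr: "norm r \<le> Rr" unfolding Rr_def by simp
      have "norm q \<le> norm t + norm r" using qt norm_Pair_le[of t r] by simp
      then show ?thesis using nt nr by (simp only: real_norm_def)
    qed
    then show ?thesis unfolding bounded_iff by blast
  qed
  have compactK: "compact K" using closedK boundedK compact_eq_bounded_closed by blast
  have p0K: "(t0, r0) \<in> K" using t0 r0 by (simp add: K_def E_def c0_def)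
  obtain qs where qs: "qs \<in> K" "\<forall>y\<in>K. h qs \<le> h y"
    using continuous_attains_inf[OF compactK _ continuous_on_subset[OF hc]] p0K by blast
  obtain ts rs where qsd: "qs = (ts, rs)" by (cases qs)
  have tsS: "ts \<in> ?S" and Grs: "G (p + ts) \<le> ereal rs" and hc0: "h qs \<le> c0"
    using qs(1) qsd by (auto simp: K_def E_def)
  have "ereal (w \<bullet> s + l / 2 * (?bn s)\<^sup>2) + G (p + s) \<ge> ereal (w \<bullet> ts + l / 2 * (?bn ts)\<^sup>2) + G (p + ts)"
    if sS: "s \<in> ?S" for s
  proof (cases "G (p + s) = \<infinity>")
    case True then show ?thesis by simp
  next
    case False
    then obtain rsv where rsv: "G (p + s) = ereal rsv" using ninf[of "p + s"] sS memS[of s] by (cases "G (p + s)") auto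
    have sE: "(s, rsv) \<in> E" using sS rsv by (simp add: E_def)
    have "h qs \<le> h (s, rsv)"
    proof (cases "h (s, rsv) \<le> c0")
      case True then show ?thesis using qs(2) sE by (auto simp: K_def)
    next
      case False then show ?thesis using hc0 by simp
    qed
    have "ereal (w \<bullet> ts + l / 2 * (?bn ts)\<^sup>2) + G (p + ts) \<le> ereal (w \<bullet> ts + l / 2 * (?bn ts)\<^sup>2) + ereal rs"
      using Grs by (rule add_left_mono)
    also have "\<dots> = ereal (h qs)" using qsd bnorm_sq[OF P tsS] by (simp add: h_def)
    also have "\<dots> \<le> ereal (h (s, rsv))" using \<open>h qs \<le> h (s, rsv)\<close> by simp
    also have "\<dots> = ereal (w \<bullet> s + l / 2 * (?bn s)\<^sup>2) + G (p + s)"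
      using rsv bnorm_sq[OF P sS] by (simp add: h_def)
    finally show ?thesis .
  qed
  then show ?thesis using tsS by blast
qed



lemma sum_ereal_not_minf:
  fixes g :: "'c \<Rightarrow> ereal"
  shows "finite A \<Longrightarrow> (\<And>j. j \<in> A \<Longrightarrow> g j \<noteq> -\<infinity>) \<Longrightarrow> sum g A \<noteq> -\<infinity>"
  by (induct A rule: finite_induct) auto

locale ucdc_setting =
  fixes blk :: "'a::finite \<Rightarrow> 'b::finite"
    and B Binv :: "'b \<Rightarrow> 'a \<Rightarrow> 'a \<Rightarrow> real"
    and L :: "'b \<Rightarrow> real"
    and f :: "real^'a \<Rightarrow> real"
    and grad :: "real^'a \<Rightarrow> real^'a"
    and Psi :: "'b \<Rightarrow> real^'a \<Rightarrow> ereal"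
    and \<mu> :: real
  assumes B_posdef: "\<And>i. block_posdef blk B i"
    and Binv: "\<And>i. block_inverse blk B Binv i"
    and L_pos: "\<And>i. L i > 0"
    and f_convex: "convex_on UNIV f"
    and f_grad: "\<And>x. (f has_derivative (\<lambda>h. grad x \<bullet> h)) (at x)"
    and f_lip: "\<And>x t i. t \<in> bsub blk i \<Longrightarrow>
        bdual blk Binv i (bproj blk i (grad (x + t)) - bproj blk i (grad x)) \<le> L i * bnorm blk B i t"
    and Psi_pcc: "\<And>i. proper_closed_convex_on (bsub blk i) (Psi i)"
    and mu_pos: "\<mu> > 0"
    and strong: "strongly_convex_L (Fobj blk f Psi) (Lnorm blk B L) \<mu>"
begin

abbreviation "F \<equiv> Fobj blk f Psi"
abbreviation "T \<equiv> Tblock blk B L grad Psi"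
abbreviation "bn \<equiv> bnorm blk B"
definition "psi i x = real_of_ereal (Psi i (bproj blk i x))"

lemma T_prop: "T i x \<in> bsub blk i \<and>
        (\<forall>s\<in>bsub blk i.
           ereal (grad x \<bullet> T i x + L i / 2 * (bn i (T i x))\<^sup>2) + Psi i (bproj blk i x + T i x)
         \<le> ereal (grad x \<bullet> s + L i / 2 * (bn i s)\<^sup>2) + Psi i (bproj blk i x + s))"
  unfolding Tblock_def
  by (rule someI_ex) (rule Tblock_exists[OF B_posdef Binv L_pos Psi_pcc bproj_bsub])

lemma Psi_ninf: "t \<in> bsub blk i \<Longrightarrow> Psi i t \<noteq> -\<infinity>"
  using Psi_pcc[of i] by (auto simp: proper_closed_convex_on_def)

lemma F_fin:
  assumes "F x \<noteq> \<infinity>"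
  shows "Psi i (bproj blk i x) = ereal (psi i x)" "F x = ereal (f x + (\<Sum>j\<in>UNIV. psi j x))"
proof -
  have nn: "Psi j (bproj blk j x) \<noteq> -\<infinity>" for j by (rule Psi_ninf[OF bproj_bsub])
  have ni: "Psi j (bproj blk j x) \<noteq> \<infinity>" for j
    using assms sum_Pinfty[of "\<lambda>j. Psi j (bproj blk j x)" UNIV] by (auto simp: Fobj_def)
  have e: "Psi j (bproj blk j x) = ereal (psi j x)" for j
    using nn[of j] ni[of j] by (cases "Psi j (bproj blk j x)") (auto simp: psi_def)
  then show "Psi i (bproj blk i x) = ereal (psi i x)" .
  show "F x = ereal (f x + (\<Sum>j\<in>UNIV. psi j x))" by (simp add: Fobj_def e)
qed

lemma F_fin_intro:
  assumes "\<And>i. Psi i (bproj blk i x) \<noteq> \<infinity>"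
  shows "F x \<noteq> \<infinity>"
  using assms sum_Pinfty[of "\<lambda>j. Psi j (bproj blk j x)" UNIV] by (auto simp: Fobj_def)

lemma F_ninf: "F x \<noteq> -\<infinity>"
proof -
  have "(\<Sum>j\<in>UNIV. Psi j (bproj blk j x)) \<noteq> -\<infinity>"
    using Psi_ninf[OF bproj_bsub] by (intro sum_ereal_not_minf) auto
  then show ?thesis by (simp add: Fobj_def)
qed

lemma Lnorm_sq: "(Lnorm blk B L v)\<^sup>2 = (\<Sum>i\<in>UNIV. L i * (bn i (bproj blk i v))\<^sup>2)"
proof -
  have "(\<Sum>i\<in>UNIV. L i * (bn i (bproj blk i v))\<^sup>2) \<ge> 0"
    using L_pos by (intro sum_nonneg) (simp add: less_imp_le)
  then show ?thesis by (simp add: Lnorm_def)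
qed

lemma Lnorm_sq_scale: "(Lnorm blk B L (c *\<^sub>R v))\<^sup>2 = c\<^sup>2 * (Lnorm blk B L v)\<^sup>2"
  by (simp add: Lnorm_sq bproj_scale bnorm_scale power_mult_distrib sum_distrib_left mult_ac)

definition "mv i x = grad x \<bullet> T i x + L i / 2 * (bn i (T i x))\<^sup>2 + real_of_ereal (Psi i (bproj blk i x + T i x))"

lemma sum_if_one:
  fixes g :: "'b \<Rightarrow> real"
  shows "(\<Sum>j\<in>UNIV. if j = i then v else g j) = (\<Sum>j\<in>UNIV. g j) + (v - g i)"
proof -
  have "(\<Sum>j\<in>UNIV. if j = i then v else g j) = (\<Sum>j\<in>UNIV. g j + (if j = i then v - g i else 0))"
    by (intro sum.cong) auto
  also have "\<dots> = (\<Sum>j\<in>UNIV. g j) + (v - g i)" by (simp add: sum.distrib)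
  finally show ?thesis .
qed

lemma step:
  assumes Fx: "F x \<noteq> \<infinity>"
  shows "Psi i (bproj blk i x + T i x) = ereal (real_of_ereal (Psi i (bproj blk i x + T i x)))"
    and "mv i x \<le> psi i x"
    and "F (x + T i x) \<noteq> \<infinity>"
    and "real_of_ereal (F (x + T i x)) \<le> f x + (\<Sum>j\<in>UNIV. psi j x) + (mv i x - psi i x)"
proof -
  define t where "t = T i x"
  have tS: "t \<in> bsub blk i" and mn: "\<And>s. s \<in> bsub blk i \<Longrightarrow>
     ereal (grad x \<bullet> t + L i / 2 * (bn i t)\<^sup>2) + Psi i (bproj blk i x + t)
         \<le> ereal (grad x \<bullet> s + L i / 2 * (bn i s)\<^sup>2) + Psi i (bproj blk i x + s)"
    using T_prop[of i x] by (auto simp: t_def)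
  have z: "0 \<in> bsub blk i" by (simp add: bsub_def)
  have le0: "ereal (grad x \<bullet> t + L i / 2 * (bn i t)\<^sup>2) + Psi i (bproj blk i x + t) \<le> ereal (psi i x)"
    using mn[OF z] F_fin(1)[OF Fx, of i] by (simp add: bnorm_def bquad_def)
  have ni: "Psi i (bproj blk i x + t) \<noteq> \<infinity>" using le0 by auto
  have nm: "Psi i (bproj blk i x + t) \<noteq> -\<infinity>" by (rule Psi_ninf[OF bsub_add[OF bproj_bsub tS]])
  define qv where "qv = real_of_ereal (Psi i (bproj blk i x + t))"
  have qv: "Psi i (bproj blk i x + t) = ereal qv" using ni nm by (cases "Psi i (bproj blk i x + t)") (auto simp: qv_def)
  then show "Psi i (bproj blk i x + T i x) = ereal (real_of_ereal (Psi i (bproj blk i x + T i x)))"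
    by (simp add: t_def)
  show mle: "mv i x \<le> psi i x" using le0 qv by (simp add: mv_def t_def[symmetric])
  have pj: "Psi j (bproj blk j (x + t)) = ereal (if j = i then qv else psi j x)" for j
  proof (cases "j = i")
    case True then show ?thesis using qv bproj_id[OF tS] by (simp add: bproj_add)
  next
    case False then show ?thesis using F_fin(1)[OF Fx, of j] bproj_other[OF tS False] by (simp add: bproj_add)
  qed
  have Fe: "F (x + t) = ereal (f (x + t) + (\<Sum>j\<in>UNIV. if j = i then qv else psi j x))"
    by (simp add: Fobj_def pj)
  then show "F (x + T i x) \<noteq> \<infinity>" by (simp add: t_def)
  have "f (x + t) \<le> f x + grad x \<bullet> t + L i / 2 * (bn i t)\<^sup>2"
    by (rule descent[where f=f and grad=grad and L=L and Binv=Binv]) (use B_posdef Binv f_grad f_lip L_pos tS in auto)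
  then show "real_of_ereal (F (x + T i x)) \<le> f x + (\<Sum>j\<in>UNIV. psi j x) + (mv i x - psi i x)"
    using Fe by (simp add: t_def[symmetric] sum_if_one mv_def qv)
qed

lemma sum_mv:
  assumes Fx: "F x \<noteq> \<infinity>" and Fy: "F y \<noteq> \<infinity>"
  shows "f x + (\<Sum>i\<in>UNIV. mv i x) \<le> real_of_ereal (F y) + (Lnorm blk B L (y - x))\<^sup>2 / 2"
proof -
  have each: "mv i x \<le> grad x \<bullet> bproj blk i (y - x) + L i / 2 * (bn i (bproj blk i (y - x)))\<^sup>2 + psi i y" for i
  proof -
    define s where "s = bproj blk i (y - x)"
    have sS: "s \<in> bsub blk i" by (simp add: s_def bproj_bsub)
    have ps: "bproj blk i x + s = bproj blk i y" by (simp add: s_def bproj_diff)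
    obtain qv where qv: "Psi i (bproj blk i x + T i x) = ereal qv"
      using step(1)[OF Fx, of i] by blast
    have "ereal (mv i x) = ereal (grad x \<bullet> T i x + L i / 2 * (bn i (T i x))\<^sup>2) + Psi i (bproj blk i x + T i x)"
      unfolding mv_def qv by simp
    also have "\<dots> \<le> ereal (grad x \<bullet> s + L i / 2 * (bn i s)\<^sup>2) + Psi i (bproj blk i x + s)"
      using T_prop[of i x] sS by blast
    also have "\<dots> = ereal (grad x \<bullet> s + L i / 2 * (bn i s)\<^sup>2 + psi i y)"
      using ps F_fin(1)[OF Fy, of i] by simp
    finally show ?thesis by (simp add: s_def)
  qed
  have "(\<Sum>i\<in>UNIV. mv i x) \<le> (\<Sum>i\<in>UNIV. grad x \<bullet> bproj blk i (y - x) + L i / 2 * (bn i (bproj blk i (y - x)))\<^sup>2 + psi i y)"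
    by (rule sum_mono[OF each])
  also have "\<dots> = grad x \<bullet> (y - x) + (Lnorm blk B L (y - x))\<^sup>2 / 2 + (\<Sum>i\<in>UNIV. psi i y)"
  proof -
    have "(\<Sum>i\<in>UNIV. grad x \<bullet> bproj blk i (y - x)) = grad x \<bullet> (y - x)"
      by (simp add: inner_sum_right[symmetric] sum_bproj)
    moreover have "(\<Sum>i\<in>UNIV. L i / 2 * (bn i (bproj blk i (y - x)))\<^sup>2) = (Lnorm blk B L (y - x))\<^sup>2 / 2"
      by (simp add: Lnorm_sq sum_divide_distrib)
    ultimately show ?thesis by (simp add: sum.distrib)
  qed
  finally have "(\<Sum>i\<in>UNIV. mv i x) \<le> grad x \<bullet> (y - x) + (Lnorm blk B L (y - x))\<^sup>2 / 2 + (\<Sum>i\<in>UNIV. psi i y)" .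
  moreover have "f x + grad x \<bullet> (y - x) \<le> f y" by (rule grad_ineq[OF f_convex f_grad])
  moreover have "real_of_ereal (F y) = f y + (\<Sum>i\<in>UNIV. psi i y)" using F_fin(2)[OF Fy] by simp
  ultimately show ?thesis by linarith
qed

lemma segment:
  assumes Fx: "F x \<noteq> \<infinity>" and Fz: "F z \<noteq> \<infinity>" and l: "0 \<le> l" "l \<le> 1"
  shows "F ((1 - l) *\<^sub>R x + l *\<^sub>R z) \<noteq> \<infinity> \<and>
    real_of_ereal (F ((1 - l) *\<^sub>R x + l *\<^sub>R z)) \<le> (1 - l) * real_of_ereal (F x) + l * real_of_ereal (F z)"
proof -
  define y where "y = (1 - l) *\<^sub>R x + l *\<^sub>R z"
  have fy: "f y \<le> (1 - l) * f x + l * f z"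
    unfolding y_def using convex_onD[OF f_convex, of l x z] l by simp
  have py: "Psi i (bproj blk i y) \<le> ereal (l * psi i z + (1 - l) * psi i x)" for i
  proof -
    have "bproj blk i y = l *\<^sub>R bproj blk i z + (1 - l) *\<^sub>R bproj blk i x"
      unfolding y_def bproj_add bproj_scale by (simp add: algebra_simps)
    then have "Psi i (bproj blk i y) \<le> ereal l * Psi i (bproj blk i z) + ereal (1 - l) * Psi i (bproj blk i x)"
      using Psi_pcc[of i, unfolded proper_closed_convex_on_def] l bproj_bsub[of blk i z] bproj_bsub[of blk i x]
      by (metis (no_types, lifting))
    also have "\<dots> = ereal (l * psi i z + (1 - l) * psi i x)"
      using F_fin(1)[OF Fx, of i] F_fin(1)[OF Fz, of i] by simp
    finally show ?thesis .
  qed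
  have Fy: "F y \<noteq> \<infinity>"
  proof (rule F_fin_intro)
    fix i show "Psi i (bproj blk i y) \<noteq> \<infinity>" using py[of i] by (cases "Psi i (bproj blk i y)") auto
  qed
  have "psi i y \<le> l * psi i z + (1 - l) * psi i x" for i
    using py[of i] F_fin(1)[OF Fy, of i] by simp
  then have "(\<Sum>i\<in>UNIV. psi i y) \<le> (\<Sum>i\<in>UNIV. l * psi i z + (1 - l) * psi i x)" by (rule sum_mono)
  also have "\<dots> = l * (\<Sum>i\<in>UNIV. psi i z) + (1 - l) * (\<Sum>i\<in>UNIV. psi i x)"
    by (simp add: sum.distrib sum_distrib_left)
  finally have "(\<Sum>i\<in>UNIV. psi i y) \<le> l * (\<Sum>i\<in>UNIV. psi i z) + (1 - l) * (\<Sum>i\<in>UNIV. psi i x)" .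
  then have "real_of_ereal (F y) \<le> (1 - l) * real_of_ereal (F x) + l * real_of_ereal (F z)"
    using fy F_fin(2)[OF Fx] F_fin(2)[OF Fz] F_fin(2)[OF Fy] by (simp add: algebra_simps)
  then show ?thesis using Fy by (simp add: y_def)
qed

lemma growth:
  assumes xs: "\<And>z. F xs \<le> F z" and Fx: "F x \<noteq> \<infinity>" and Fxs: "F xs \<noteq> \<infinity>"
  shows "\<mu> / 2 * (Lnorm blk B L (x - xs))\<^sup>2 \<le> real_of_ereal (F x) - real_of_ereal (F xs)"
proof -
  have g0: "0 \<in> subgradients F xs" using xs by (simp add: subgradients_def)
  have "F x \<ge> F xs + ereal (0 \<bullet> (x - xs)) + ereal (\<mu> / 2 * (Lnorm blk B L (x - xs))\<^sup>2)"
    using strong[unfolded strongly_convex_L_def, rule_format, of x xs 0] g0 Fx Fxs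
    by (simp add: less_top[symmetric])
  then show ?thesis using F_fin(2)[OF Fx] F_fin(2)[OF Fxs] by simp
qed

lemma contraction:
  assumes xs: "\<And>z. F xs \<le> F z" and Fx: "F x \<noteq> \<infinity>" and Fxs: "F xs \<noteq> \<infinity>"
  shows "(\<Sum>i\<in>UNIV. real_of_ereal (F (x + T i x)) - real_of_ereal (F xs))
     \<le> (real CARD('b) - (1 - gamma_mu \<mu>)) * (real_of_ereal (F x) - real_of_ereal (F xs))"
proof -
  define Fs where "Fs = real_of_ereal (F xs)"
  define Fr where "Fr = real_of_ereal (F x)"
  define D where "D = Fr - Fs"
  define n where "n = real CARD('b)"
  define l where "l = (if \<mu> \<le> 2 then \<mu> / 2 else 1)"
  have l01: "0 \<le> l" "l \<le> 1" using mu_pos by (auto simp: l_def)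
  have lg: "- l + l\<^sup>2 / \<mu> = - (1 - gamma_mu \<mu>)"
    using mu_pos by (auto simp: l_def gamma_mu_def power2_eq_square field_simps)
  define y where "y = (1 - l) *\<^sub>R x + l *\<^sub>R xs"
  from segment[OF Fx Fxs l01] have Fy: "F y \<noteq> \<infinity>" and Fry: "real_of_ereal (F y) \<le> (1 - l) * Fr + l * Fs"
    by (auto simp: y_def Fr_def Fs_def)
  have sm: "f x + (\<Sum>i\<in>UNIV. mv i x) \<le> real_of_ereal (F y) + (Lnorm blk B L (y - x))\<^sup>2 / 2"
    by (rule sum_mv[OF Fx Fy])
  have yx: "y - x = l *\<^sub>R ((-1) *\<^sub>R (x - xs))" by (simp add: y_def algebra_simps)
  have Lyx: "(Lnorm blk B L (y - x))\<^sup>2 = l\<^sup>2 * (Lnorm blk B L (x - xs))\<^sup>2"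
    unfolding yx Lnorm_sq_scale by simp
  have gr: "\<mu> / 2 * (Lnorm blk B L (x - xs))\<^sup>2 \<le> D"
    using growth[OF xs Fx Fxs] by (simp add: D_def Fr_def Fs_def)
  have "(Lnorm blk B L (x - xs))\<^sup>2 \<le> 2 * D / \<mu>" using gr mu_pos by (simp add: field_simps)
  then have "l\<^sup>2 * (Lnorm blk B L (x - xs))\<^sup>2 / 2 \<le> l\<^sup>2 * (2 * D / \<mu>) / 2"
    by (intro divide_right_mono mult_left_mono) auto
  then have Lb: "(Lnorm blk B L (y - x))\<^sup>2 / 2 \<le> l\<^sup>2 / \<mu> * D" using Lyx by simp
  have st: "real_of_ereal (F (x + T i x)) \<le> f x + (\<Sum>j\<in>UNIV. psi j x) + (mv i x - psi i x)" for i
    by (rule step(4)[OF Fx])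
  have Frx: "Fr = f x + (\<Sum>j\<in>UNIV. psi j x)" using F_fin(2)[OF Fx] by (simp add: Fr_def)
  have "(\<Sum>i\<in>UNIV. real_of_ereal (F (x + T i x)) - Fs) \<le> (\<Sum>i\<in>UNIV. Fr + (mv i x - psi i x) - Fs)"
  proof (rule sum_mono)
    fix i show "real_of_ereal (F (x + T i x)) - Fs \<le> Fr + (mv i x - psi i x) - Fs"
      using st[of i] Frx by linarith
  qed
  also have "\<dots> = n * (Fr - Fs) + (\<Sum>i\<in>UNIV. mv i x) - (\<Sum>i\<in>UNIV. psi i x)"
    by (simp add: sum.distrib sum_subtractf n_def algebra_simps)
  also have "\<dots> = n * (Fr - Fs) + (f x + (\<Sum>i\<in>UNIV. mv i x)) - Fr"
    using Frx by simp
  also have "\<dots> \<le> n * (Fr - Fs) + ((1 - l) * Fr + l * Fs + l\<^sup>2 / \<mu> * D) - Fr"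
    using sm Fry Lb by linarith
  also have "\<dots> = (n + (- l + l\<^sup>2 / \<mu>)) * D" by (simp add: D_def algebra_simps)
  also have "\<dots> = (n - (1 - gamma_mu \<mu>)) * D" using lg by simp
  finally show ?thesis by (simp add: D_def Fr_def Fs_def n_def)
qed

lemma ucdc_prefix:
  "(\<And>j. j < k \<Longrightarrow> is j = is' j) \<Longrightarrow> ucdc blk B L grad Psi x0 is k = ucdc blk B L grad Psi x0 is' k"
  by (induct k) (auto simp: Let_def)

lemma finite_iter:
  assumes "F x0 \<noteq> \<infinity>"
  shows "F (ucdc blk B L grad Psi x0 is k) \<noteq> \<infinity>"
  by (induct k) (use assms step(3) in \<open>auto simp: Let_def\<close>)

lemma gamma_pos: "gamma_mu \<mu> > 0"
  using mu_pos by (auto simp: gamma_mu_def)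

lemma S_rec:
  assumes xs: "\<And>z. F xs \<le> F z" and F0: "F x0 \<noteq> \<infinity>" and Fxs: "F xs \<noteq> \<infinity>"
  shows "(\<Sum>is\<in>PiE {..<Suc k} (\<lambda>_. UNIV). real_of_ereal (F (ucdc blk B L grad Psi x0 is (Suc k))) - real_of_ereal (F xs))
    \<le> (real CARD('b) - (1 - gamma_mu \<mu>)) *
      (\<Sum>is\<in>PiE {..<k} (\<lambda>_. UNIV). real_of_ereal (F (ucdc blk B L grad Psi x0 is k)) - real_of_ereal (F xs))"
proof -
  let ?U = "\<lambda>_::nat. (UNIV :: 'b set)"
  let ?X = "\<lambda>is k. ucdc blk B L grad Psi x0 is k"
  let ?Fs = "real_of_ereal (F xs)"
  let ?c = "real CARD('b) - (1 - gamma_mu \<mu>)"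
  let ?m = "\<lambda>(y, g). g(k := y)"
  have eq: "PiE {..<Suc k} ?U = ?m ` (UNIV \<times> PiE {..<k} ?U)"
    using PiE_insert_eq[of k "{..<k}" ?U] by (simp add: lessThan_Suc)
  have inj: "inj_on ?m (UNIV \<times> PiE {..<k} ?U)"
  proof (rule inj_onI, clarify)
    fix y g y' g'
    assume g: "g \<in> PiE {..<k} ?U" and g': "g' \<in> PiE {..<k} ?U" and e: "g(k := y) = g'(k := y')"
    have "y = y'" using fun_cong[OF e, of k] by simp
    moreover have "g = g'"
    proof
      fix j show "g j = g' j"
      proof (cases "j = k")
        case True then show ?thesis using g g' by (auto simp: PiE_def extensional_def)
      next
        case False then show ?thesis using fun_cong[OF e, of j] by simp
      qed
    qed
    ultimately show "y = y' \<and> g = g'" by simp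
  qed
  have "(\<Sum>is\<in>PiE {..<Suc k} ?U. real_of_ereal (F (?X is (Suc k))) - ?Fs)
      = (\<Sum>q\<in>UNIV \<times> PiE {..<k} ?U. real_of_ereal (F (?X (?m q) (Suc k))) - ?Fs)"
    unfolding eq by (rule sum.reindex[OF inj, unfolded comp_def])
  also have "\<dots> = (\<Sum>y\<in>UNIV. \<Sum>g\<in>PiE {..<k} ?U. real_of_ereal (F (?X (g(k := y)) (Suc k))) - ?Fs)"
    by (simp add: sum.cartesian_product split_beta)
  also have "\<dots> = (\<Sum>g\<in>PiE {..<k} ?U. \<Sum>y\<in>UNIV. real_of_ereal (F (?X g k + T y (?X g k))) - ?Fs)"
  proof -
    have "?X (g(k := y)) k = ?X g k" for g y by (rule ucdc_prefix) simp
    then show ?thesis by (subst sum.swap) (simp add: Let_def)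
  qed
  also have "\<dots> \<le> (\<Sum>g\<in>PiE {..<k} ?U. ?c * (real_of_ereal (F (?X g k)) - ?Fs))"
    by (intro sum_mono contraction[OF xs finite_iter[OF F0] Fxs])
  also have "\<dots> = ?c * (\<Sum>g\<in>PiE {..<k} ?U. real_of_ereal (F (?X g k)) - ?Fs)"
    by (simp add: sum_distrib_left)
  finally show ?thesis .
qed

lemma S_bound:
  assumes xs: "\<And>z. F xs \<le> F z" and F0: "F x0 \<noteq> \<infinity>" and Fxs: "F xs \<noteq> \<infinity>"
  shows "(\<Sum>is\<in>PiE {..<k} (\<lambda>_. UNIV). real_of_ereal (F (ucdc blk B L grad Psi x0 is k)) - real_of_ereal (F xs))
    \<le> (real CARD('b) - (1 - gamma_mu \<mu>)) ^ k * (real_of_ereal (F x0) - real_of_ereal (F xs))"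
proof (induct k)
  case 0 then show ?case by simp
next
  case (Suc k)
  have c0: "real CARD('b) - (1 - gamma_mu \<mu>) \<ge> 0"
  proof -
    have "real CARD('b) \<ge> 1" using zero_less_card_finite[where 'a='b] by linarith
    then show ?thesis using gamma_pos by linarith
  qed
  show ?case
    using order_trans[OF S_rec[OF xs F0 Fxs, of k] mult_left_mono[OF Suc c0]] by (simp add: mult_ac)
qed

lemma ereal_real_fin: "(z::ereal) \<noteq> \<infinity> \<Longrightarrow> z \<noteq> -\<infinity> \<Longrightarrow> z = ereal (real_of_ereal z)"
  by (cases z) auto

lemma final:
  assumes xs: "\<And>z. F xs \<le> F z"
  shows "expect_ucdc k (\<lambda>is. F (ucdc blk B L grad Psi x0 is k) - (INF x. F x))
    \<le> ereal ((1 - (1 - gamma_mu \<mu>) / real CARD('b)) ^ k) * (F x0 - (INF x. F x))"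
proof -
  let ?X = "\<lambda>is. ucdc blk B L grad Psi x0 is k"
  let ?U = "\<lambda>_::nat. (UNIV :: 'b set)"
  define n where "n = real CARD('b)"
  define c where "c = 1 - (1 - gamma_mu \<mu>) / n"
  have n1: "n \<ge> 1" using zero_less_card_finite[where 'a='b] unfolding n_def by linarith
  have cpos: "c > 0"
  proof -
    have "(1 - gamma_mu \<mu>) / n < 1" using n1 gamma_pos by (simp add: field_simps)
    then show ?thesis by (simp add: c_def)
  qed
  have inf: "(INF x. F x) = F xs"
    by (rule antisym) (auto intro: INF_lower INF_greatest xs)
  show ?thesis
  proof (cases "F x0 = \<infinity>")
    case True
    then have "F x0 - F xs = \<infinity>" by (cases "F xs") auto
    moreover have "c ^ k > 0" using cpos by simp
    ultimately have r: "ereal (c ^ k) * (F x0 - F xs) = \<infinity>" using cpos by simp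
    have r2: "ereal ((1 - (1 - gamma_mu \<mu>) / real CARD('b)) ^ k) * (F x0 - F xs) = \<infinity>"
      using r by (simp only: c_def n_def)
    show ?thesis unfolding inf r2 by simp
  next
    case False
    have Fxs: "F xs \<noteq> \<infinity>" using xs[of x0] False by (auto simp: top_unique[where 'a=ereal, unfolded top_ereal_def])
    define Fs where "Fs = real_of_ereal (F xs)"
    have exs: "F xs = ereal Fs" using ereal_real_fin[OF Fxs F_ninf] by (simp add: Fs_def)
    have terms: "F (?X is) - F xs = ereal (real_of_ereal (F (?X is)) - Fs)" for "is"
      using ereal_real_fin[OF finite_iter[OF False] F_ninf, of "is" k] exs by (metis ereal_minus(1))
    have e0: "F x0 - F xs = ereal (real_of_ereal (F x0) - Fs)"
      using ereal_real_fin[OF False F_ninf] exs by (metis ereal_minus(1))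
    define S where "S = (\<Sum>is\<in>PiE {..<k} ?U. real_of_ereal (F (?X is)) - Fs)"
    have Sb: "S \<le> (n - (1 - gamma_mu \<mu>)) ^ k * (real_of_ereal (F x0) - Fs)"
      using S_bound[OF xs False Fxs, of k] by (simp add: S_def Fs_def n_def)
    have cn: "(n - (1 - gamma_mu \<mu>)) / n = c" using n1 by (simp add: c_def field_simps)
    have "S / n ^ k \<le> (n - (1 - gamma_mu \<mu>)) ^ k * (real_of_ereal (F x0) - Fs) / n ^ k"
      using Sb n1 by (intro divide_right_mono) auto
    also have "\<dots> = c ^ k * (real_of_ereal (F x0) - Fs)"
      by (simp add: cn[symmetric] power_divide)
    finally have real: "1 / n ^ k * S \<le> c ^ k * (real_of_ereal (F x0) - Fs)" by simp
    have "expect_ucdc k (\<lambda>is. F (?X is) - (INF x. F x)) = ereal (1 / n ^ k * S)"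
      unfolding expect_ucdc_def inf terms S_def n_def by simp
    also have "\<dots> \<le> ereal (c ^ k * (real_of_ereal (F x0) - Fs))" using real by simp
    also have "\<dots> = ereal (c ^ k) * (F x0 - (INF x. F x))" unfolding inf e0 by simp
    finally show ?thesis by (simp add: c_def n_def)
  qed
qed

end

theorem theorem6:
  fixes blk :: "'a::finite \<Rightarrow> 'b::finite"
    and B Binv :: "'b \<Rightarrow> 'a \<Rightarrow> 'a \<Rightarrow> real"
    and L :: "'b \<Rightarrow> real"
    and f :: "real^'a \<Rightarrow> real"
    and grad :: "real^'a \<Rightarrow> real^'a"
    and Psi :: "'b \<Rightarrow> real^'a \<Rightarrow> ereal"
    and \<mu> :: real and x0 :: "real^'a" and k :: nat
  assumes blocks_nonempty: "\<And>i. blockset blk i \<noteq> {}"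
    and B_posdef: "\<And>i. block_posdef blk B i"
    and Binv: "\<And>i. block_inverse blk B Binv i"
    and L_pos: "\<And>i. L i > 0"
    and f_convex: "convex_on UNIV f"
    and f_grad: "\<And>x. (f has_derivative (\<lambda>h. grad x \<bullet> h)) (at x)"
    and f_lip: "\<And>x t i. t \<in> bsub blk i \<Longrightarrow>
        bdual blk Binv i (bproj blk i (grad (x + t)) - bproj blk i (grad x)) \<le> L i * bnorm blk B i t"
    and Psi_pcc: "\<And>i. proper_closed_convex_on (bsub blk i) (Psi i)"
    and minimizer: "\<exists>xs. \<forall>x. Fobj blk f Psi xs \<le> Fobj blk f Psi x"
    and mu_pos: "\<mu> > 0"
    and strong: "strongly_convex_L (Fobj blk f Psi) (Lnorm blk B L) \<mu>"
  shows "expect_ucdc k (\<lambda>is. Fobj blk f Psi (ucdc blk B L grad Psi x0 is k) - (INF x. Fobj blk f Psi x))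
    \<le> ereal ((1 - (1 - gamma_mu \<mu>) / real CARD('b)) ^ k) * (Fobj blk f Psi x0 - (INF x. Fobj blk f Psi x))"
  proof -
  interpret u: ucdc_setting blk B Binv L f grad Psi \<mu>
    by (unfold_locales; (rule B_posdef Binv L_pos f_convex f_grad f_lip Psi_pcc mu_pos strong)?)
  obtain xs where xs: "\<And>x. Fobj blk f Psi xs \<le> Fobj blk f Psi x" using minimizer by blast
  show ?thesis by (rule u.final[OF xs])
qed

end
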